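(* Every barrier $B$ contains an end-closed subbarrier, i.e. there is a barrier $B'\subseteq B$ which is end-closed.
   Context: Finite subsets of $\mathbb{N}$ are identified with their increasing enumerations. A barrier is an infinite set $B$ of finite subsets of $\mathbb{N}$, no member of which is a proper subset of another, such that every infinite $X\subseteq\bigcup B$ has a nonempty initial segment (in its increasing enumeration) belonging to $B$. For a finite sequence $s$, $s_*$ denotes $s$ with its last element removed, and $B_*=\{s_*: s\in B\}$. For $s$ a finite increasing sequence and $a$ greater than all elements of $s$, $s\cdot(a)$ is the sequence obtained by appending $a$. A barrier $B$ is end-closed if $s\cdot(a)\in B$ for every $s\in B_*$ and every $a\in\bigcup B$ greater than all elements of $s$. *)

theory Defs
  imports Main
begin

text \<open>Finite subsets of the naturals are represented as (finite) values of type nat set;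
  the increasing enumeration is implicit.\<close>

definition initial_segment :: "nat set \<Rightarrow> nat set \<Rightarrow> bool" where
  "initial_segment s X \<longleftrightarrow> s \<subseteq> X \<and> (\<forall>x\<in>X. \<forall>y\<in>s. x \<le> y \<longrightarrow> x \<in> s)"

definition barrier :: "nat set set \<Rightarrow> bool" where
  "barrier B \<longleftrightarrow> infinite B \<and> (\<forall>s\<in>B. finite s)
     \<and> (\<forall>s\<in>B. \<forall>t\<in>B. \<not> s \<subset> t)
     \<and> (\<forall>X. X \<subseteq> \<Union>B \<and> infinite X \<longrightarrow>
           (\<exists>s\<in>B. s \<noteq> {} \<and> finite s \<and> initial_segment s X))"

definition drop_last :: "nat set \<Rightarrow> nat set" where
  "drop_last s = s - {Max s}"

definition end_closed :: "nat set set \<Rightarrow> bool" where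
  "end_closed B \<longleftrightarrow> (\<forall>s\<in>drop_last ` B. \<forall>a\<in>\<Union>B. (\<forall>x\<in>s. x < a) \<longrightarrow> insert a s \<in> B)"

end

theory Submission
  imports Defs
begin

lemma homog_ex:
  assumes "finite T" "infinite N"
  shows "\<exists>N'\<subseteq>N. infinite N' \<and> (\<forall>t\<in>T. (\<forall>a\<in>N'. Q t a) \<or> (\<forall>a\<in>N'. \<not> Q t a))"
  using assms(1)
proof (induction T rule: finite_induct)
  case empty
  then show ?case using assms(2) by blast
next
  case (insert t T)
  then obtain N' where N': "N' \<subseteq> N" "infinite N'"
    "\<forall>t\<in>T. (\<forall>a\<in>N'. Q t a) \<or> (\<forall>a\<in>N'. \<not> Q t a)" by blast
  have "N' = {a\<in>N'. Q t a} \<union> {a\<in>N'. \<not> Q t a}" by blast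
  then have "infinite {a\<in>N'. Q t a} \<or> infinite {a\<in>N'. \<not> Q t a}"
    using N'(2) by (metis finite_UnI)
  then show ?case
  proof
    assume h: "infinite {a\<in>N'. Q t a}"
    show ?case
      by (rule exI[of _ "{a\<in>N'. Q t a}"]) (use h N' in auto)
  next
    assume h: "infinite {a\<in>N'. \<not> Q t a}"
    show ?case
      by (rule exI[of _ "{a\<in>N'. \<not> Q t a}"]) (use h N' in auto)
  qed
qed

definition homog :: "nat set set \<Rightarrow> nat set \<Rightarrow> nat set \<Rightarrow> nat set" where
  "homog B F N = (SOME N'. N' \<subseteq> N \<and> infinite N' \<and>
     (\<forall>t\<in>Pow F. (\<forall>a\<in>N'. insert a t \<in> B) \<or> (\<forall>a\<in>N'. insert a t \<notin> B)))"

lemma homog: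
  assumes "finite F" "infinite N"
  shows "homog B F N \<subseteq> N \<and> infinite (homog B F N) \<and>
     (\<forall>t\<in>Pow F. (\<forall>a\<in>homog B F N. insert a t \<in> B) \<or> (\<forall>a\<in>homog B F N. insert a t \<notin> B))"
proof -
  have "\<exists>N'\<subseteq>N. infinite N' \<and> (\<forall>t\<in>Pow F. (\<forall>a\<in>N'. insert a t \<in> B) \<or> (\<forall>a\<in>N'. \<not> insert a t \<in> B))"
    by (rule homog_ex) (use assms in auto)
  then show ?thesis unfolding homog_def by (rule someI_ex[where P = "\<lambda>N'. N' \<subseteq> N \<and> infinite N' \<and>
     (\<forall>t\<in>Pow F. (\<forall>a\<in>N'. insert a t \<in> B) \<or> (\<forall>a\<in>N'. insert a t \<notin> B))"])
qed

fun stp :: "nat set set \<Rightarrow> nat set \<Rightarrow> nat \<Rightarrow> nat set \<times> nat set" where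
  "stp B U 0 = ({}, homog B {} U)"
| "stp B U (Suc k) = (let F = fst (stp B U k); N = snd (stp B U k); m = (LEAST x. x \<in> N) in
      (insert m F, homog B (insert m F) (N - {m})))"

lemma stp_inv:
  assumes "infinite U"
  shows "finite (fst (stp B U k)) \<and> infinite (snd (stp B U k)) \<and> snd (stp B U k) \<subseteq> U
    \<and> (\<forall>x\<in>fst (stp B U k). \<forall>y\<in>snd (stp B U k). x < y)
    \<and> (\<forall>t. t \<subseteq> fst (stp B U k) \<longrightarrow> (\<forall>a\<in>snd (stp B U k). insert a t \<in> B) \<or> (\<forall>a\<in>snd (stp B U k). insert a t \<notin> B))
    \<and> card (fst (stp B U k)) = k"
proof (induction k)
  case 0
  then show ?case using homog[of "{}" U B] assms by auto
next
  case (Suc k)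
  define F where "F = fst (stp B U k)"
  define N where "N = snd (stp B U k)"
  define m where "m = (LEAST x. x \<in> N)"
  define N' where "N' = homog B (insert m F) (N - {m})"
  have e: "stp B U (Suc k) = (insert m F, N')"
    by (simp add: F_def N_def m_def N'_def Let_def)
  have IH: "finite F" "infinite N" "N \<subseteq> U" "\<forall>x\<in>F. \<forall>y\<in>N. x < y"
    "\<forall>t. t \<subseteq> F \<longrightarrow> (\<forall>a\<in>N. insert a t \<in> B) \<or> (\<forall>a\<in>N. insert a t \<notin> B)" "card F = k"
    using Suc unfolding F_def N_def by auto
  have mN: "m \<in> N" unfolding m_def using IH(2)
    by (metis LeastI_ex finite.emptyI ex_in_conv)
  have inf1: "infinite (N - {m})" using IH(2) by simp
  have H: "N' \<subseteq> N - {m}" "infinite N'"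
    "\<forall>t\<in>Pow (insert m F). (\<forall>a\<in>N'. insert a t \<in> B) \<or> (\<forall>a\<in>N'. insert a t \<notin> B)"
    using homog[OF _ inf1, of "insert m F" B] IH(1) unfolding N'_def by auto
  have mless: "\<forall>y\<in>N'. m < y"
  proof
    fix y assume "y \<in> N'"
    then have "y \<in> N" "y \<noteq> m" using H(1) by auto
    moreover have "m \<le> y" unfolding m_def using \<open>y \<in> N\<close> IH(2)
      by (simp add: Least_le)
    ultimately show "m < y" by simp
  qed
  have mF: "m \<notin> F" using IH(4) mN by blast
  show ?case unfolding e fst_conv snd_conv
    using IH H mless mF mN by auto
qed


lemma stp_Suc:
  assumes "infinite U"
  shows "fst (stp B U (Suc k)) = insert (LEAST x. x \<in> snd (stp B U k)) (fst (stp B U k))"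
    "snd (stp B U (Suc k)) \<subseteq> snd (stp B U k)"
    "(LEAST x. x \<in> snd (stp B U k)) \<in> snd (stp B U k)"
proof -
  have i: "infinite (snd (stp B U k))" "finite (fst (stp B U k))" using stp_inv[OF assms] by auto
  show "fst (stp B U (Suc k)) = insert (LEAST x. x \<in> snd (stp B U k)) (fst (stp B U k))"
    by (simp add: Let_def)
  have "infinite (snd (stp B U k) - {LEAST x. x \<in> snd (stp B U k)})" using i by simp
  from homog[OF _ this, of "insert (LEAST x. x \<in> snd (stp B U k)) (fst (stp B U k))" B] i
  show "snd (stp B U (Suc k)) \<subseteq> snd (stp B U k)"
    by (auto simp: Let_def)
  show "(LEAST x. x \<in> snd (stp B U k)) \<in> snd (stp B U k)" using i
    by (metis LeastI_ex finite.emptyI ex_in_conv)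
qed

lemma NN_anti:
  assumes "infinite U" "k \<le> j"
  shows "snd (stp B U j) \<subseteq> snd (stp B U k)"
  using assms(2)
proof (induction j rule: dec_induct)
  case base then show ?case by simp
next
  case (step j) then show ?case using stp_Suc(2)[OF assms(1), of B j] by blast
qed

lemma FF_mono:
  assumes "infinite U" "k \<le> j"
  shows "fst (stp B U k) \<subseteq> fst (stp B U j)"
  using assms(2)
proof (induction j rule: dec_induct)
  case base then show ?case by simp
next
  case (step j) then show ?case using stp_Suc(1)[OF assms(1), of B j] by blast
qed

lemma M_minus:
  assumes "infinite U" "x \<in> fst (stp B U j)" "x \<notin> fst (stp B U k)"
  shows "x \<in> snd (stp B U k)"
  using assms(2,3)
proof (induction j)
  case 0 then show ?case by simp
next
  case (Suc j)
  show ?case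
  proof (cases "x \<in> fst (stp B U j)")
    case True then show ?thesis using Suc by blast
  next
    case False
    then have x: "x = (LEAST x. x \<in> snd (stp B U j))"
      using Suc.prems(1) stp_Suc(1)[OF assms(1), of B j] by auto
    have "k \<le> j"
    proof (rule ccontr)
      assume "\<not> k \<le> j"
      then have "Suc j \<le> k" by simp
      then have "fst (stp B U (Suc j)) \<subseteq> fst (stp B U k)" using FF_mono[OF assms(1), of "Suc j" k B] by blast
      then show False using Suc.prems by blast
    qed
    then show ?thesis using x stp_Suc(3)[OF assms(1), of B j] NN_anti[OF assms(1) \<open>k \<le> j\<close>] by blast
  qed
qed

lemma split_pt:
  assumes "infinite U" "x \<in> fst (stp B U j)" "t \<subseteq> (\<Union>k. fst (stp B U k))" "\<forall>y\<in>t. y < x"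
  shows "\<exists>k. t \<subseteq> fst (stp B U k) \<and> x \<notin> fst (stp B U k)"
  using assms(2)
proof (induction j)
  case 0 then show ?case by simp
next
  case (Suc j)
  show ?case
  proof (cases "x \<in> fst (stp B U j)")
    case True then show ?thesis using Suc by blast
  next
    case False
    then have x: "x = (LEAST x. x \<in> snd (stp B U j))"
      using Suc.prems(1) stp_Suc(1)[OF assms(1), of B j] by auto
    have "t \<subseteq> fst (stp B U j)"
    proof
      fix y assume y: "y \<in> t"
      then obtain i where i: "y \<in> fst (stp B U i)" using assms(3) by blast
      show "y \<in> fst (stp B U j)"
      proof (rule ccontr)
        assume "y \<notin> fst (stp B U j)"
        then have "y \<in> snd (stp B U j)" using M_minus[OF assms(1) i] by blast
        then have "x \<le> y" unfolding x by (rule Least_le)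
        then show False using assms(4) y by force
      qed
    qed
    then show ?thesis using False by blast
  qed
qed

lemma key:
  assumes "infinite U" "t \<subseteq> (\<Union>k. fst (stp B U k))"
    "a \<in> (\<Union>k. fst (stp B U k))" "b \<in> (\<Union>k. fst (stp B U k))"
    "\<forall>y\<in>t. y < a" "\<forall>y\<in>t. y < b" "insert b t \<in> B"
  shows "insert a t \<in> B"
proof -
  obtain ja jb where ja: "a \<in> fst (stp B U ja)" and jb: "b \<in> fst (stp B U jb)" using assms(3,4) by blast
  obtain ka where ka: "t \<subseteq> fst (stp B U ka)" "a \<notin> fst (stp B U ka)"
    using split_pt[OF assms(1) ja assms(2,5)] by blast
  obtain kb where kb: "t \<subseteq> fst (stp B U kb)" "b \<notin> fst (stp B U kb)"
    using split_pt[OF assms(1) jb assms(2,6)] by blast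
  define k where "k = min ka kb"
  have "t \<subseteq> fst (stp B U k)" using ka kb k_def by (cases "ka \<le> kb") (auto simp: min_def)
  moreover have "a \<notin> fst (stp B U k)" "b \<notin> fst (stp B U k)"
    using ka kb FF_mono[OF assms(1), of k ka B] FF_mono[OF assms(1), of k kb B] k_def by auto
  ultimately have "a \<in> snd (stp B U k)" "b \<in> snd (stp B U k)" "t \<subseteq> fst (stp B U k)"
    using M_minus[OF assms(1) ja] M_minus[OF assms(1) jb] by auto
  then show ?thesis using stp_inv[OF assms(1), of B k] assms(7) by blast
qed

lemma M_inf:
  assumes "infinite U"
  shows "infinite (\<Union>k. fst (stp B U k))"
proof
  assume f: "finite (\<Union>k. fst (stp B U k))"
  let ?n = "card (\<Union>k. fst (stp B U k))"
  have "card (fst (stp B U (Suc ?n))) \<le> ?n" by (intro card_mono[OF f]) blast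
  then show False using stp_inv[OF assms, of B "Suc ?n"] by simp
qed

lemma M_sub:
  assumes "infinite U"
  shows "(\<Union>k. fst (stp B U k)) \<subseteq> U"
proof -
  have "fst (stp B U k) \<subseteq> U" for k
  proof (induction k)
    case 0 then show ?case by simp
  next
    case (Suc k) then show ?case using stp_Suc[OF assms, of B k] stp_inv[OF assms, of B k] by auto
  qed
  then show ?thesis by blast
qed

theorem lemma2p10:
  assumes "barrier B"
  shows "\<exists>B'. B' \<subseteq> B \<and> barrier B' \<and> end_closed B'"
proof -
  define U where "U = \<Union>B"
  have infB: "infinite B" and finB: "\<forall>s\<in>B. finite s" and anti: "\<forall>s\<in>B. \<forall>t\<in>B. \<not> s \<subset> t"
    and bar: "\<And>X. X \<subseteq> U \<Longrightarrow> infinite X \<Longrightarrow> \<exists>s\<in>B. s \<noteq> {} \<and> finite s \<and> initial_segment s X"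
    using assms unfolding barrier_def U_def by auto
  have infU: "infinite U"
  proof
    assume "finite U"
    then have "B \<subseteq> Pow U" "finite (Pow U)" unfolding U_def by auto
    then show False using infB finite_subset by blast
  qed
  have emp: "{} \<notin> B"
  proof
    assume e: "{} \<in> B"
    then have "B \<subseteq> {{}}" using anti by blast
    then show False using infB finite_subset by blast
  qed
  define M where "M = (\<Union>k. fst (stp B U k))"
  have infM: "infinite M" and MU: "M \<subseteq> U" using M_inf[OF infU] M_sub[OF infU] M_def by auto
  define B' where "B' = {s\<in>B. s \<subseteq> M}"
  have B'M: "\<Union>B' \<subseteq> M" unfolding B'_def by auto
  have bar': "\<exists>s\<in>B'. s \<noteq> {} \<and> finite s \<and> initial_segment s X" if hX: "X \<subseteq> M" "infinite X" for X
  proof -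
    have "X \<subseteq> U" using hX(1) MU by (rule subset_trans)
    obtain s where s: "s \<in> B" "s \<noteq> {}" "finite s" "initial_segment s X" using bar[OF \<open>X \<subseteq> U\<close> hX(2)] by blast
    then have "s \<subseteq> X" unfolding initial_segment_def by simp
    then have "s \<in> B'" using s(1) hX(1) unfolding B'_def by simp
    then show ?thesis using s by blast
  qed
  have infB': "infinite B'"
  proof
    assume fB': "finite B'"
    have "finite (\<Union>B')" by (rule finite_Union) (use fB' finB in \<open>auto simp: B'_def\<close>)
    then obtain n where n: "\<forall>x\<in>\<Union>B'. x \<le> n" using finite_nat_set_iff_bounded_le by blast
    have "infinite {x\<in>M. n < x}"
    proof
      assume "finite {x\<in>M. n < x}"
      moreover have "M \<subseteq> {x\<in>M. n < x} \<union> {..n}" by auto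
      ultimately show False using infM finite_subset by blast
    qed
    then obtain s where "s \<in> B'" "s \<noteq> {}" "initial_segment s {x\<in>M. n < x}" using bar'[of "{x\<in>M. n < x}"] by blast
    then obtain y where "y \<in> s" by blast
    then show False using n \<open>s \<in> B'\<close> \<open>initial_segment s {x\<in>M. n < x}\<close>
      unfolding initial_segment_def by fastforce
  qed
  have "barrier B'"
    unfolding barrier_def
  proof (intro conjI allI impI)
    show "infinite B'" by (fact infB')
    show "\<forall>s\<in>B'. finite s" using finB unfolding B'_def by blast
    show "\<forall>s\<in>B'. \<forall>t\<in>B'. \<not> s \<subset> t" using anti unfolding B'_def by blast
    fix X assume "X \<subseteq> \<Union>B' \<and> infinite X"
    then show "\<exists>s\<in>B'. s \<noteq> {} \<and> finite s \<and> initial_segment s X"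
      using bar' B'M by (meson subset_trans)
  qed
  moreover have "end_closed B'"
    unfolding end_closed_def
  proof (intro ballI impI)
    fix s a assume s: "s \<in> drop_last ` B'" and a: "a \<in> \<Union>B'" and lt: "\<forall>x\<in>s. x < a"
    then obtain s0 where s0: "s0 \<in> B'" "s = s0 - {Max s0}" unfolding drop_last_def by blast
    have s0B: "s0 \<in> B" "s0 \<subseteq> M" "finite s0" "s0 \<noteq> {}" using s0 finB emp unfolding B'_def by auto
    define b where "b = Max s0"
    have bs0: "b \<in> s0" using s0B b_def by simp
    have ins: "insert b s = s0" using s0 bs0 b_def by auto
    have ltb: "\<forall>y\<in>s. y < b"
    proof
      fix y assume "y \<in> s"
      then have "y \<in> s0" "y \<noteq> b" using s0 b_def by auto
      then show "y < b" using Max_ge[OF s0B(3)] b_def by (metis le_neq_implies_less)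
    qed
    have sM: "s \<subseteq> M" using s0 s0B by blast
    have aM: "a \<in> M" using a B'M by blast
    have bM: "b \<in> M" using bs0 s0B by blast
    have "insert b s \<in> B" using ins s0B by simp
    then have "insert a s \<in> B"
      using key[OF infU, where t=s and a=a and b=b and B=B] sM aM bM ltb lt unfolding M_def by blast
    moreover have "insert a s \<subseteq> M" using a B'M s0 s0B by auto
    ultimately show "insert a s \<in> B'" unfolding B'_def by simp
  qed
  moreover have "B' \<subseteq> B" unfolding B'_def by auto
  ultimately show ?thesis by blast
qed

end
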